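(* Let $p \geqslant 3$ be a prime and $d \geqslant 1$ with $p^d \geqslant 7$, and let $V$ be a $d$-dimensional vector space over $\mathbb{F}_p$ with basis $\mathbf{b}_1,\ldots,\mathbf{b}_d$. Let $G = \mathrm{Sym}(V)$, let $\mu$ be a primitive element of $\mathbb{F}_p$, and for each $j$ let $g_j \in \mathrm{GL}(V)$ send $\mathbf{b}_j$ to $\mu\mathbf{b}_j$ and fix $\mathbf{b}_l$ for $l \neq j$; let $T = \langle g_1,\ldots,g_d\rangle$ be the group of diagonal matrices with respect to this basis. Let $i \in \{1,\ldots,d\}$ and let $a$ be a positive divisor of $p-1$ with $(p,a) \neq (5,2)$. Then there exists $x \in G$ such that \[ T \cap T^x = \langle g_1,\ldots,g_{i-1}, g_i^{a}, g_{i+1},\ldots,g_d\rangle. \]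
   Context: $\mathrm{GL}(V)$ is regarded as a subgroup of $\mathrm{Sym}(V)$. *)

theory Defs
  imports "HOL-Algebra.Algebra" "HOL-Number_Theory.Number_Theory"
begin

text \<open>The d-dimensional vector space F_p^d, vectors as functions nat => nat with
  coordinates in {0..<p} on indices 0..<d and 0 elsewhere. The basis vector b_(j+1)
  of the paper is the standard basis vector at index j.\<close>
definition Vsp :: "nat \<Rightarrow> nat \<Rightarrow> (nat \<Rightarrow> nat) set" where
  "Vsp p d = {v. (\<forall>j<d. v j < p) \<and> (\<forall>j\<ge>d. v j = 0)}"

definition SymV :: "nat \<Rightarrow> nat \<Rightarrow> ((nat \<Rightarrow> nat) \<Rightarrow> (nat \<Rightarrow> nat)) monoid" where
  "SymV p d = BijGroup (Vsp p d)"

definition gdiag :: "nat \<Rightarrow> nat \<Rightarrow> nat \<Rightarrow> nat \<Rightarrow> (nat \<Rightarrow> nat) \<Rightarrow> (nat \<Rightarrow> nat)" where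
  "gdiag p d mu j = (\<lambda>v \<in> Vsp p d. v(j := (mu * v j) mod p))"

definition conjg :: "('a, 'b) monoid_scheme \<Rightarrow> 'a set \<Rightarrow> 'a \<Rightarrow> 'a set" where
  "conjg G H x = (\<lambda>h. inv\<^bsub>G\<^esub> x \<otimes>\<^bsub>G\<^esub> h \<otimes>\<^bsub>G\<^esub> x) ` H"

end

theory Submission
  imports Defs
begin

definition Dm :: "nat \<Rightarrow> nat \<Rightarrow> nat \<Rightarrow> (nat \<Rightarrow> nat) \<Rightarrow> (nat \<Rightarrow> nat) \<Rightarrow> (nat \<Rightarrow> nat)" where
  "Dm p d mu e = (\<lambda>v \<in> Vsp p d. (\<lambda>j. (mu ^ (e j) * v j) mod p))"

definition Xm :: "nat \<Rightarrow> nat \<Rightarrow> nat \<Rightarrow> (nat \<Rightarrow> nat) \<Rightarrow> (nat \<Rightarrow> nat) \<Rightarrow> (nat \<Rightarrow> nat)" where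
  "Xm p d i s = (\<lambda>v \<in> Vsp p d. v(i := s (v i)))"

lemma finite_Vsp: "finite (Vsp p d)"
proof -
  have "Vsp p d \<subseteq> (\<lambda>f j. if j < d then f j else 0) ` PiE {..<d} (\<lambda>_. {..<p})"
  proof
    fix v assume v: "v \<in> Vsp p d"
    have "v = (\<lambda>j. if j < d then (restrict v {..<d}) j else 0)"
      using v by (auto simp: Vsp_def)
    moreover have "restrict v {..<d} \<in> PiE {..<d} (\<lambda>_. {..<p})"
      using v by (auto simp: Vsp_def)
    ultimately show "v \<in> (\<lambda>f j. if j < d then f j else 0) ` PiE {..<d} (\<lambda>_. {..<p})"
      by blast
  qed
  moreover have "finite (PiE {..<d} (\<lambda>_. {..<p::nat}))"
    by (rule finite_PiE) auto
  ultimately show ?thesis using finite_subset by blast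
qed

lemma mult_G:
  assumes "f \<in> carrier (BijGroup S)" "g \<in> carrier (BijGroup S)"
  shows "g \<otimes>\<^bsub>BijGroup S\<^esub> f = (\<lambda>v \<in> S. g (f v))"
  using assms by (simp add: BijGroup_def compose_def)

lemma one_G: "\<one>\<^bsub>BijGroup S\<^esub> = (\<lambda>v \<in> S. v)"
  by (simp add: BijGroup_def)

lemma carrier_G: "carrier (BijGroup S) = Bij S"
  by (simp add: BijGroup_def)

lemma (in group) conj_eq1:
  assumes "x \<in> carrier G" "h \<in> carrier G" "t = inv x \<otimes> h \<otimes> x"
  shows "x \<otimes> t = h \<otimes> x"
  using assms by (simp add: m_assoc[symmetric])

lemma (in group) conj_eq2:
  assumes "x \<in> carrier G" "t \<in> carrier G" "x \<otimes> t = t \<otimes> x"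
  shows "inv x \<otimes> t \<otimes> x = t"
  using assms by (simp add: m_assoc) (metis assms(3) inv_solve_left' m_closed)

lemma cong_nat_int_dvd: "[(x::nat) = y] (mod n) \<Longrightarrow> int n dvd int x - int y"
  by (simp add: cong_int_iff[symmetric] cong_iff_dvd_diff)

lemma arith_key:
  fixes n a E F :: nat
  assumes an: "a dvd n" "0 < a" "a < n" "\<not> (n = 4 \<and> a = 2)" "\<not> a dvd E"
    and H: "\<And>s. [E + s + (if a dvd E + s then a else 0) = F + s + (if a dvd s then a else 0)] (mod n)"
  shows False
proof -
  have H0: "[E = F + a] (mod n)" using H[of 0] an(5) by simp
  define s1 where "s1 = (n - 1) * E"
  have "E + s1 = n * E" using an(3) by (cases n) (simp_all add: s1_def algebra_simps)
  then have d1: "a dvd E + s1" using an(1) by simp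
  have nd1: "\<not> a dvd s1"
  proof
    assume "a dvd s1"
    then have "a dvd (E + s1) - s1" using d1 dvd_diff_nat by blast
    then show False using an(5) by simp
  qed
  have "[(E + a) + s1 = F + s1] (mod n)" using H[of s1] d1 nd1 by (simp add: ac_simps)
  then have H1: "[E + a = F] (mod n)" using cong_add_rcancel_nat by blast
  have i0: "int n dvd int E - (int F + int a)" using cong_nat_int_dvd[OF H0] by simp
  have i1: "int n dvd (int E + int a) - int F" using cong_nat_int_dvd[OF H1] by simp
  have "int n dvd ((int E + int a) - int F) - (int E - (int F + int a))"
    using i0 i1 dvd_diff by blast
  then have "int n dvd int (2 * a)" by (simp add: algebra_simps)
  then have "n dvd 2 * a" by (simp only: of_nat_dvd_iff)
  then obtain k where k: "2 * a = n * k" by (auto elim: dvdE)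
  have "k = 1"
  proof -
    have "k \<noteq> 0"
    proof
      assume "k = 0" then have "2 * a = 0" using k by simp
      then show False using an(2) by simp
    qed
    moreover have "k < 2"
    proof (rule ccontr)
      assume "\<not> k < 2" then have "n * 2 \<le> n * k" by simp
      then show False using k an(3) by linarith
    qed
    ultimately show ?thesis by simp
  qed
  then have n2a: "n = 2 * a" using k by simp
  have a3: "a \<ge> 3"
  proof -
    have "a \<noteq> 1" using an(5) by auto
    moreover have "a \<noteq> 2" using an(4) n2a by auto
    ultimately show ?thesis using an(2) by linarith
  qed
  define s0 where "s0 = (if a dvd E + 1 then 2 else (1::nat))"
  have nd0: "\<not> a dvd s0" using a3 by (auto simp: s0_def dest: dvd_imp_le)
  have nd0': "\<not> a dvd E + s0"
  proof
    assume h: "a dvd E + s0"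
    show False
    proof (cases "a dvd E + 1")
      case True
      have h2: "a dvd E + 2" using h True by (simp add: s0_def)
      have "a dvd (E + 2) - (E + 1)" by (rule dvd_diff_nat[OF h2 True])
      then show False using a3 by simp
    next
      case False
      then show False using h by (simp add: s0_def)
    qed
  qed
  have "[E + s0 = F + s0] (mod n)" using H[of s0] nd0 nd0' by simp
  then have H2: "[E = F] (mod n)" using cong_add_rcancel_nat by blast
  have i2: "int n dvd int E - int F" using cong_nat_int_dvd[OF H2] by simp
  have "int n dvd (int E - int F) - (int E - (int F + int a))" using i0 i2 dvd_diff by blast
  then have "int n dvd int a" by simp
  then have "n dvd a" by (simp only: of_nat_dvd_iff)
  then show False using an(2,3) by (auto dest: dvd_imp_le)
qed

context
  fixes p d mu :: nat
  assumes p1: "p > 1" and cop: "coprime p mu"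
    and pc: "\<And>A B. [mu^A = mu^B] (mod p) \<longleftrightarrow> [A = B] (mod (p-1))"
begin

lemma pc': "mu^A mod p = mu^B mod p \<longleftrightarrow> [A = B] (mod (p-1))"
  using pc by (simp add: cong_def)

lemma Vsp_lt: "v \<in> Vsp p d \<Longrightarrow> v j < p"
  using p1 by (cases "j < d") (auto simp: Vsp_def)

lemma Vsp_mod: "v \<in> Vsp p d \<Longrightarrow> v j mod p = v j"
  using Vsp_lt by simp

lemma Dm_in_V: "v \<in> Vsp p d \<Longrightarrow> Dm p d mu e v \<in> Vsp p d"
  using p1 by (auto simp: Dm_def Vsp_def)

lemma Dm_comp: "v \<in> Vsp p d \<Longrightarrow> Dm p d mu e (Dm p d mu f v) = Dm p d mu (\<lambda>j. e j + f j) v"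
  using Dm_in_V[of v f]
  by (auto simp: Dm_def power_add mod_mult_right_eq mult.assoc)

lemma Dm_cong:
  assumes "\<And>j. j < d \<Longrightarrow> [e j = f j] (mod (p-1))"
  shows "Dm p d mu e = Dm p d mu f"
proof
  fix v
  show "Dm p d mu e v = Dm p d mu f v"
  proof (cases "v \<in> Vsp p d")
    case True
    show ?thesis
    proof
      fix j
      show "Dm p d mu e v j = Dm p d mu f v j"
      proof (cases "j < d")
        case True
        then have "mu ^ e j mod p = mu ^ f j mod p" using assms pc' by blast
        then show ?thesis using \<open>v \<in> Vsp p d\<close>
          by (simp add: Dm_def) (metis mod_mult_left_eq)
      next
        case False
        then show ?thesis using \<open>v \<in> Vsp p d\<close> by (simp add: Dm_def Vsp_def)
      qed
    qed
  qed (simp add: Dm_def)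
qed

lemma Dm_zero: "Dm p d mu (\<lambda>_. 0) = (\<lambda>v \<in> Vsp p d. v)"
  by (auto simp: Dm_def Vsp_mod)

lemma Dm_carrier: "Dm p d mu e \<in> carrier (BijGroup (Vsp p d))"
proof -
  let ?f = "Dm p d mu (\<lambda>j. (p - 2) * e j)"
  have inv1: "?f (Dm p d mu e v) = v" if "v \<in> Vsp p d" for v
  proof -
    have "?f (Dm p d mu e v) = Dm p d mu (\<lambda>j. (p - 2) * e j + e j) v"
      using Dm_comp that by simp
    also have "Dm p d mu (\<lambda>j. (p - 2) * e j + e j) = Dm p d mu (\<lambda>_. 0)"
    proof (rule Dm_cong)
      fix j
      have "(p - 2) * e j + e j = (p - 1) * e j" using p1
        by (simp add: algebra_simps)
      then show "[(p - 2) * e j + e j = 0] (mod (p - 1))"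
        by (simp add: cong_def)
    qed
    finally show ?thesis using that Dm_zero by simp
  qed
  have inv2: "Dm p d mu e (?f v) = v" if "v \<in> Vsp p d" for v
  proof -
    have "Dm p d mu e (?f v) = Dm p d mu (\<lambda>j. e j + (p - 2) * e j) v"
      using Dm_comp that by simp
    also have "Dm p d mu (\<lambda>j. e j + (p - 2) * e j) = Dm p d mu (\<lambda>_. 0)"
    proof (rule Dm_cong)
      fix j
      have "e j + (p - 2) * e j = (p - 1) * e j" using p1
        by (simp add: algebra_simps)
      then show "[e j + (p - 2) * e j = 0] (mod (p - 1))"
        by (simp add: cong_def)
    qed
    finally show ?thesis using that Dm_zero by simp
  qed
  have "bij_betw (Dm p d mu e) (Vsp p d) (Vsp p d)"
    by (rule bij_betw_byWitness[where f' = ?f]) (use inv1 inv2 Dm_in_V in auto)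
  then show ?thesis by (simp add: carrier_G Bij_def Dm_def)
qed

lemma Dm_mult: "Dm p d mu e \<otimes>\<^bsub>BijGroup (Vsp p d)\<^esub> Dm p d mu f = Dm p d mu (\<lambda>j. e j + f j)"
proof -
  have "Dm p d mu e \<otimes>\<^bsub>BijGroup (Vsp p d)\<^esub> Dm p d mu f = (\<lambda>v \<in> Vsp p d. Dm p d mu e (Dm p d mu f v))"
    by (rule mult_G) (rule Dm_carrier)+
  also have "\<dots> = Dm p d mu (\<lambda>j. e j + f j)"
  proof
    fix v show "(\<lambda>v \<in> Vsp p d. Dm p d mu e (Dm p d mu f v)) v = Dm p d mu (\<lambda>j. e j + f j) v"
      by (cases "v \<in> Vsp p d") (simp_all add: Dm_comp, simp add: Dm_def)
  qed
  finally show ?thesis .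
qed

lemma cong_pm2: "[(p - 2) * k + k = 0] (mod (p - 1))"
proof -
  have "(p - 2) * k + k = (p - 1) * k" using p1 by (simp add: algebra_simps)
  then show ?thesis by (simp add: cong_def)
qed

lemma Dm_one: "Dm p d mu (\<lambda>_. 0) = \<one>\<^bsub>BijGroup (Vsp p d)\<^esub>"
  by (simp add: Dm_zero one_G)

lemma Dm_inv: "inv\<^bsub>BijGroup (Vsp p d)\<^esub> (Dm p d mu e) = Dm p d mu (\<lambda>j. (p - 2) * e j)"
proof (rule group.inv_equality[OF group_BijGroup])
  have "Dm p d mu (\<lambda>j. (p - 2) * e j + e j) = Dm p d mu (\<lambda>_. 0)"
    by (rule Dm_cong) (rule cong_pm2)
  then show "Dm p d mu (\<lambda>j. (p - 2) * e j) \<otimes>\<^bsub>BijGroup (Vsp p d)\<^esub> Dm p d mu e = \<one>\<^bsub>BijGroup (Vsp p d)\<^esub>"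
    by (simp add: Dm_mult Dm_one)
qed (rule Dm_carrier)+

lemma Dm_pow: "Dm p d mu e [^]\<^bsub>BijGroup (Vsp p d)\<^esub> (n::nat) = Dm p d mu (\<lambda>j. n * e j)"
proof (induction n)
  case 0
  then show ?case by (simp add: Dm_one)
next
  case (Suc n)
  then show ?case by (simp add: Dm_mult algebra_simps)
qed

lemma gen_pow_in:
  assumes "h \<in> generate G S" shows "h [^]\<^bsub>G\<^esub> (n::nat) \<in> generate G S"
  by (induction n) (auto intro: generate.one generate.eng assms)

lemma GEN:
  "generate (BijGroup (Vsp p d)) ((\<lambda>j. Dm p d mu (\<lambda>l. if l = j then w j else 0)) ` {..<d})
   = {Dm p d mu e | e. \<forall>j<d. w j dvd e j}"
  (is "generate ?G ?S = ?R")
proof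
  show "generate ?G ?S \<subseteq> ?R"
  proof
    fix h assume "h \<in> generate ?G ?S"
    then show "h \<in> ?R"
    proof (induction rule: generate.induct)
      case one
      have "\<one>\<^bsub>?G\<^esub> = Dm p d mu (\<lambda>_. 0) \<and> (\<forall>j<d. w j dvd (0::nat))"
        by (simp add: Dm_one)
      then show ?case by blast
    next
      case (incl h)
      then obtain j where "j < d" "h = Dm p d mu (\<lambda>l. if l = j then w j else 0)" by blast
      then have "h = Dm p d mu (\<lambda>l. if l = j then w j else 0) \<and> (\<forall>k<d. w k dvd (if k = j then w j else 0))"
        by simp
      then show ?case by blast
    next
      case (inv h)
      then obtain j where "j < d" "h = Dm p d mu (\<lambda>l. if l = j then w j else 0)" by blast
      then have "inv\<^bsub>?G\<^esub> h = Dm p d mu (\<lambda>l. (p - 2) * (if l = j then w j else 0)) \<and> (\<forall>k<d. w k dvd (p - 2) * (if k = j then w j else 0))"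
        by (simp add: Dm_inv)
      then show ?case by blast
    next
      case (eng h1 h2)
      then obtain e1 e2 where "h1 = Dm p d mu e1" "h2 = Dm p d mu e2"
        "\<forall>j<d. w j dvd e1 j" "\<forall>j<d. w j dvd e2 j" by blast
      then have "h1 \<otimes>\<^bsub>?G\<^esub> h2 = Dm p d mu (\<lambda>j. e1 j + e2 j) \<and> (\<forall>j<d. w j dvd e1 j + e2 j)"
        by (simp add: Dm_mult)
      then show ?case by blast
    qed
  qed
next
  show "?R \<subseteq> generate ?G ?S"
  proof
    fix h assume "h \<in> ?R"
    then obtain e where h: "h = Dm p d mu e" and dv: "\<forall>j<d. w j dvd e j" by auto
    have "J \<subseteq> {..<d} \<Longrightarrow> Dm p d mu (\<lambda>j. if j \<in> J then e j else 0) \<in> generate ?G ?S"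
      if "finite J" for J
      using that
    proof (induction J rule: finite_induct)
      case empty
      then show ?case using generate.one[of ?G ?S] by (simp add: Dm_one)
    next
      case (insert j J)
      then have jd: "j < d" by auto
      have g: "Dm p d mu (\<lambda>l. if l = j then w j else 0) \<in> generate ?G ?S"
        using jd by (intro generate.incl) simp
      have pw: "Dm p d mu (\<lambda>l. if l = j then w j else 0) [^]\<^bsub>?G\<^esub> (e j div w j) \<in> generate ?G ?S"
        by (rule gen_pow_in[OF g])
      have eq: "(\<lambda>l. e j div w j * (if l = j then w j else 0)) = (\<lambda>l. if l = j then e l else 0)"
        using dv jd by (auto simp: dvd_div_mult_self)
      have IH: "Dm p d mu (\<lambda>l. if l \<in> J then e l else 0) \<in> generate ?G ?S"
        using insert.IH insert.prems by simp
      have "Dm p d mu (\<lambda>l. if l \<in> J then e l else 0) \<otimes>\<^bsub>?G\<^esub> Dm p d mu (\<lambda>l. if l = j then e l else 0)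
          \<in> generate ?G ?S"
      proof -
        have "Dm p d mu (\<lambda>l. if l = j then w j else 0) [^]\<^bsub>?G\<^esub> (e j div w j) = Dm p d mu (\<lambda>l. if l = j then e l else 0)"
          by (simp only: Dm_pow eq)
        then show ?thesis using generate.eng[OF IH pw] by simp
      qed
      moreover have "(\<lambda>l. (if l \<in> J then e l else 0) + (if l = j then e l else 0)) = (\<lambda>l. if l \<in> insert j J then e l else 0)"
        using insert by auto
      ultimately show ?case by (simp add: Dm_mult)
    qed
    from this[of "{..<d}"] have "Dm p d mu (\<lambda>j. if j \<in> {..<d} then e j else 0) \<in> generate ?G ?S" by simp
    moreover have "Dm p d mu (\<lambda>j. if j \<in> {..<d} then e j else 0) = h"
      unfolding h by (rule Dm_cong) auto
    ultimately show "h \<in> generate ?G ?S" by simp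
  qed
qed

lemma X_in_V:
  assumes "i < d" "s ` {..<p} \<subseteq> {..<p}" "v \<in> Vsp p d"
  shows "Xm p d i s v \<in> Vsp p d"
proof -
  have "s (v i) < p" using assms Vsp_lt[of v i] by auto
  then show ?thesis using assms by (auto simp: Xm_def Vsp_def)
qed

lemma X_carrier:
  assumes "i < d" "s ` {..<p} \<subseteq> {..<p}" "inj_on s {..<p}"
  shows "Xm p d i s \<in> carrier (BijGroup (Vsp p d))"
proof -
  have sub: "Xm p d i s ` Vsp p d \<subseteq> Vsp p d" using X_in_V assms by blast
  have inj: "inj_on (Xm p d i s) (Vsp p d)"
  proof
    fix v w assume v: "v \<in> Vsp p d" and w: "w \<in> Vsp p d" and eq: "Xm p d i s v = Xm p d i s w"
    then have eq': "v(i := s (v i)) = w(i := s (w i))" by (simp add: Xm_def)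
    then have "s (v i) = s (w i)" by (metis fun_upd_same)
    then have "v i = w i" using assms(3) Vsp_lt[OF v, of i] Vsp_lt[OF w, of i] by (auto dest: inj_onD)
    then show "v = w" using eq' by (metis fun_upd_triv fun_upd_upd)
  qed
  have "Xm p d i s ` Vsp p d = Vsp p d"
    by (rule endo_inj_surj[OF finite_Vsp sub inj])
  then have "bij_betw (Xm p d i s) (Vsp p d) (Vsp p d)" using inj by (simp add: bij_betw_def)
  then show ?thesis by (simp add: carrier_G Bij_def Xm_def)
qed

lemma X_comm:
  assumes "i < d" "s ` {..<p} \<subseteq> {..<p}" "inj_on s {..<p}"
    and A: "\<And>y. y < p \<Longrightarrow> s ((mu ^ e i * y) mod p) = (mu ^ e i * s y) mod p"
  shows "Xm p d i s \<otimes>\<^bsub>BijGroup (Vsp p d)\<^esub> Dm p d mu e = Dm p d mu e \<otimes>\<^bsub>BijGroup (Vsp p d)\<^esub> Xm p d i s"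
proof -
  have xc: "Xm p d i s \<in> carrier (BijGroup (Vsp p d))" by (rule X_carrier[OF assms(1-3)])
  have "(\<lambda>v \<in> Vsp p d. Xm p d i s (Dm p d mu e v)) = (\<lambda>v \<in> Vsp p d. Dm p d mu e (Xm p d i s v))"
  proof (rule restrict_ext)
    fix v assume v: "v \<in> Vsp p d"
    have dv: "Dm p d mu e v \<in> Vsp p d" by (rule Dm_in_V[OF v])
    have xv: "Xm p d i s v \<in> Vsp p d" by (rule X_in_V[OF assms(1,2) v])
    show "Xm p d i s (Dm p d mu e v) = Dm p d mu e (Xm p d i s v)"
      using v dv xv A[OF Vsp_lt[OF v, of i]] by (auto simp: Xm_def Dm_def)
  qed
  then show ?thesis using xc Dm_carrier by (simp add: mult_G)
qed

lemma X_cond: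
  assumes "i < d" "s ` {..<p} \<subseteq> {..<p}" "inj_on s {..<p}"
    and eq: "Xm p d i s \<otimes>\<^bsub>BijGroup (Vsp p d)\<^esub> Dm p d mu e = Dm p d mu f \<otimes>\<^bsub>BijGroup (Vsp p d)\<^esub> Xm p d i s"
    and y: "y < p"
  shows "s ((mu ^ e i * y) mod p) = (mu ^ f i * s y) mod p"
proof -
  have xc: "Xm p d i s \<in> carrier (BijGroup (Vsp p d))" by (rule X_carrier[OF assms(1-3)])
  define u where "u = (\<lambda>j. if j = i then y else (0::nat))"
  have u: "u \<in> Vsp p d" using assms(1) y by (auto simp: u_def Vsp_def)
  have "(\<lambda>v \<in> Vsp p d. Xm p d i s (Dm p d mu e v)) u = (\<lambda>v \<in> Vsp p d. Dm p d mu f (Xm p d i s v)) u"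
    using eq xc Dm_carrier by (simp add: mult_G)
  then have "Xm p d i s (Dm p d mu e u) i = Dm p d mu f (Xm p d i s u) i" using u by simp
  moreover have "Dm p d mu e u \<in> Vsp p d" by (rule Dm_in_V[OF u])
  moreover have "Xm p d i s u \<in> Vsp p d" by (rule X_in_V[OF assms(1,2) u])
  ultimately show ?thesis using u by (simp add: Xm_def Dm_def u_def)
qed

lemma MAIN:
  assumes "i < d" "s ` {..<p} \<subseteq> {..<p}" "inj_on s {..<p}"
    and A: "\<And>E y. a dvd E \<Longrightarrow> y < p \<Longrightarrow> s ((mu ^ E * y) mod p) = (mu ^ E * s y) mod p"
    and B: "\<And>E F. (\<forall>y<p. s ((mu ^ E * y) mod p) = (mu ^ F * s y) mod p) \<Longrightarrow> \<exists>E'. a dvd E' \<and> [E = E'] (mod (p - 1))"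
  shows "{Dm p d mu e | e. \<forall>j<d. (1::nat) dvd e j} \<inter>
      conjg (BijGroup (Vsp p d)) {Dm p d mu e | e. \<forall>j<d. (1::nat) dvd e j} (Xm p d i s)
    = {Dm p d mu e | e. \<forall>j<d. (if j = i then a else 1) dvd e j}"
proof -
  let ?G = "BijGroup (Vsp p d)"
  let ?x = "Xm p d i s"
  have grp: "group ?G" by (rule group_BijGroup)
  have xc: "?x \<in> carrier ?G" by (rule X_carrier[OF assms(1-3)])
  show ?thesis
  proof (intro equalityI subsetI)
    fix t assume "t \<in> {Dm p d mu e | e. \<forall>j<d. (1::nat) dvd e j} \<inter>
      conjg ?G {Dm p d mu e | e. \<forall>j<d. (1::nat) dvd e j} ?x"
    then obtain e f where te: "t = Dm p d mu e" and tf: "t = inv\<^bsub>?G\<^esub> ?x \<otimes>\<^bsub>?G\<^esub> Dm p d mu f \<otimes>\<^bsub>?G\<^esub> ?x"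
      by (auto simp: conjg_def)
    have "?x \<otimes>\<^bsub>?G\<^esub> t = Dm p d mu f \<otimes>\<^bsub>?G\<^esub> ?x"
      by (rule group.conj_eq1[OF grp xc Dm_carrier tf])
    then have "?x \<otimes>\<^bsub>?G\<^esub> Dm p d mu e = Dm p d mu f \<otimes>\<^bsub>?G\<^esub> ?x" using te by simp
    then have "\<forall>y<p. s ((mu ^ e i * y) mod p) = (mu ^ f i * s y) mod p"
      using X_cond[OF assms(1-3)] by blast
    then obtain E' where E': "a dvd E'" "[e i = E'] (mod (p - 1))" using B by blast
    have "Dm p d mu e = Dm p d mu (e(i := E'))"
      by (rule Dm_cong) (use E' in auto)
    moreover have "\<forall>j<d. (if j = i then a else 1) dvd (e(i := E')) j" using E' by auto
    ultimately show "t \<in> {Dm p d mu e | e. \<forall>j<d. (if j = i then a else 1) dvd e j}"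
      using te by blast
  next
    fix t assume "t \<in> {Dm p d mu e | e. \<forall>j<d. (if j = i then a else 1) dvd e j}"
    then obtain e where te: "t = Dm p d mu e" and dv: "\<forall>j<d. (if j = i then a else 1) dvd e j" by blast
    have ai: "a dvd e i" using dv assms(1) by (metis)
    have "?x \<otimes>\<^bsub>?G\<^esub> t = t \<otimes>\<^bsub>?G\<^esub> ?x"
      unfolding te by (rule X_comm[OF assms(1-3)]) (rule A[OF ai])
    then have cj: "inv\<^bsub>?G\<^esub> ?x \<otimes>\<^bsub>?G\<^esub> t \<otimes>\<^bsub>?G\<^esub> ?x = t"
      using group.conj_eq2[OF grp xc] te Dm_carrier by blast
    have mem: "t \<in> {Dm p d mu e | e. \<forall>j<d. (1::nat) dvd e j}"
      unfolding te by (intro CollectI exI[of _ e]) simp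
    have "t \<in> conjg ?G {Dm p d mu e | e. \<forall>j<d. (1::nat) dvd e j} ?x"
      unfolding conjg_def by (rule image_eqI[where x = t]) (simp add: cj, rule mem)
    then show "t \<in> {Dm p d mu e | e. \<forall>j<d. (1::nat) dvd e j} \<inter>
      conjg ?G {Dm p d mu e | e. \<forall>j<d. (1::nat) dvd e j} ?x" using mem by blast
  qed
qed

lemma gdiag_Dm: "gdiag p d mu j = Dm p d mu (\<lambda>l. if l = j then 1 else 0)"
  unfolding gdiag_def Dm_def
  by (rule restrict_ext) (auto simp: Vsp_mod)

lemma T_eq: "generate (BijGroup (Vsp p d)) (gdiag p d mu ` {..<d}) = {Dm p d mu e | e. \<forall>j<d. (1::nat) dvd e j}"
proof -
  have "gdiag p d mu ` {..<d} = (\<lambda>j. Dm p d mu (\<lambda>l. if l = j then (\<lambda>_. 1::nat) j else 0)) ` {..<d}"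
    by (simp add: gdiag_Dm)
  then show ?thesis using GEN[of "\<lambda>_. 1"] by simp
qed

lemma H_eq:
  assumes "i < d"
  shows "generate (BijGroup (Vsp p d)) (gdiag p d mu ` ({..<d} - {i}) \<union> {gdiag p d mu i [^]\<^bsub>BijGroup (Vsp p d)\<^esub> a})
    = {Dm p d mu e | e. \<forall>j<d. (if j = i then a else 1) dvd e j}"
proof -
  let ?w = "\<lambda>j. if j = i then a else (1::nat)"
  have pw: "gdiag p d mu i [^]\<^bsub>BijGroup (Vsp p d)\<^esub> a = Dm p d mu (\<lambda>l. if l = i then ?w i else 0)"
    unfolding gdiag_Dm Dm_pow by (rule arg_cong[where f = "Dm p d mu"]) auto
  have im: "gdiag p d mu ` ({..<d} - {i}) = (\<lambda>j. Dm p d mu (\<lambda>l. if l = j then ?w j else 0)) ` ({..<d} - {i})"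
    by (rule image_cong) (auto simp: gdiag_Dm)
  have ins: "{..<d} = insert i ({..<d} - {i})" using assms by auto
  let ?f = "\<lambda>j. Dm p d mu (\<lambda>l. if l = j then ?w j else 0)"
  have "?f ` {..<d} = ?f ` insert i ({..<d} - {i})" by (rule arg_cong[OF ins])
  also have "\<dots> = insert (?f i) (?f ` ({..<d} - {i}))" by (rule image_insert)
  also have "\<dots> = gdiag p d mu ` ({..<d} - {i}) \<union> {gdiag p d mu i [^]\<^bsub>BijGroup (Vsp p d)\<^esub> a}"
    by (simp only: im[symmetric] pw[symmetric]) blast
  finally have "?f ` {..<d} = gdiag p d mu ` ({..<d} - {i}) \<union> {gdiag p d mu i [^]\<^bsub>BijGroup (Vsp p d)\<^esub> a}" .
  then show ?thesis using GEN[of ?w] by simp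
qed

lemma case1:
  assumes "a = p - 1"
  defines "s \<equiv> (\<lambda>y::nat. if y = 0 then 1 else if y = 1 then 0 else y)"
  shows "s ` {..<p} \<subseteq> {..<p}" "inj_on s {..<p}"
    "\<And>E y. a dvd E \<Longrightarrow> y < p \<Longrightarrow> s ((mu ^ E * y) mod p) = (mu ^ E * s y) mod p"
    "\<And>E F. (\<forall>y<p. s ((mu ^ E * y) mod p) = (mu ^ F * s y) mod p) \<Longrightarrow> \<exists>E'. a dvd E' \<and> [E = E'] (mod (p - 1))"
proof -
  show "s ` {..<p} \<subseteq> {..<p}" using p1 by (auto simp: s_def)
  show "inj_on s {..<p}" by (auto simp: s_def inj_on_def split: if_splits)
  show "s ((mu ^ E * y) mod p) = (mu ^ E * s y) mod p" if "a dvd E" "y < p" for E y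
  proof -
    have "[E = 0] (mod (p - 1))" using that assms(1) by (simp add: cong_0_iff)
    then have "mu ^ E mod p = 1" using pc'[of E 0] p1 by simp
    then have m: "(mu ^ E * z) mod p = z" if "z < p" for z
      using that by (metis mod_mult_left_eq mult_1 mod_less)
    have "s y < p" using \<open>y < p\<close> p1 by (auto simp: s_def)
    then show ?thesis using m[OF \<open>y < p\<close>] m[of "s y"] by simp
  qed
  show "\<exists>E'. a dvd E' \<and> [E = E'] (mod (p - 1))"
    if H: "\<forall>y<p. s ((mu ^ E * y) mod p) = (mu ^ F * s y) mod p" for E F
  proof -
    have "s ((mu ^ E * 1) mod p) = (mu ^ F * s 1) mod p" using H p1 by blast
    then have "s (mu ^ E mod p) = 0" by (simp add: s_def)
    then have "mu ^ E mod p = 1" by (simp add: s_def split: if_splits)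
    then have "mu ^ E mod p = mu ^ 0 mod p" using p1 by simp
    then have "[E = 0] (mod (p - 1))" using pc' by blast
    then show ?thesis by blast
  qed
qed

lemma case2:
  assumes an: "a dvd p - 1" "0 < a" "a < p - 1" "\<not> (p = 5 \<and> a = 2)"
  defines "s \<equiv> (\<lambda>y::nat. if (\<exists>t. a dvd t \<and> y = mu ^ t mod p) then (mu ^ a * y) mod p else y)"
  shows "s ` {..<p} \<subseteq> {..<p}" "inj_on s {..<p}"
    "\<And>E y. a dvd E \<Longrightarrow> y < p \<Longrightarrow> s ((mu ^ E * y) mod p) = (mu ^ E * s y) mod p"
    "\<And>E F. (\<forall>y<p. s ((mu ^ E * y) mod p) = (mu ^ F * s y) mod p) \<Longrightarrow> \<exists>E'. a dvd E' \<and> [E = E'] (mod (p - 1))"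
proof -
  have K1: "(\<exists>t. a dvd t \<and> mu ^ u mod p = mu ^ t mod p) \<longleftrightarrow> a dvd u" for u
  proof
    assume "\<exists>t. a dvd t \<and> mu ^ u mod p = mu ^ t mod p"
    then obtain t where t: "a dvd t" "mu ^ u mod p = mu ^ t mod p" by blast
    then have "[u = t] (mod (p - 1))" using pc' by blast
    then have "[u = t] (mod a)" using an(1) cong_dvd_modulus_nat by blast
    then show "a dvd u" using t(1) cong_dvd_iff by blast
  qed blast
  have sp: "s (mu ^ t mod p) = mu ^ (t + (if a dvd t then a else 0)) mod p" for t
  proof (cases "a dvd t")
    case True
    then have "\<exists>t'. a dvd t' \<and> mu ^ t mod p = mu ^ t' mod p" by blast
    then have "s (mu ^ t mod p) = (mu ^ a * (mu ^ t mod p)) mod p" by (simp add: s_def)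
    also have "\<dots> = mu ^ (t + a) mod p" by (simp add: mod_mult_right_eq power_add mult.commute)
    finally show ?thesis using True by simp
  next
    case False
    then have "\<not> (\<exists>t'. a dvd t' \<and> mu ^ t mod p = mu ^ t' mod p)" using K1 by blast
    then have "s (mu ^ t mod p) = mu ^ t mod p" unfolding s_def by (intro if_not_P)
    then show ?thesis using False by simp
  qed
  show "s ` {..<p} \<subseteq> {..<p}" using p1 by (auto simp: s_def)
  show "inj_on s {..<p}"
  proof
    fix y y' assume y: "y \<in> {..<p}" and y': "y' \<in> {..<p}" and eq: "s y = s y'"
    show "y = y'"
    proof (cases "\<exists>t. a dvd t \<and> y = mu ^ t mod p")
      case True
      then obtain t where t: "a dvd t" "y = mu ^ t mod p" by blast
      have sy: "s y = mu ^ (t + a) mod p" using sp[of t] t by simp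
      show ?thesis
      proof (cases "\<exists>t. a dvd t \<and> y' = mu ^ t mod p")
        case True
        then obtain t' where t': "a dvd t'" "y' = mu ^ t' mod p" by blast
        have "s y' = mu ^ (t' + a) mod p" using sp[of t'] t' by simp
        then have "mu ^ (t + a) mod p = mu ^ (t' + a) mod p" using sy eq by simp
        then have "[t + a = t' + a] (mod (p - 1))" using pc' by blast
        then have "[t = t'] (mod (p - 1))" using cong_add_rcancel_nat by blast
        then show ?thesis using t t' pc' by simp
      next
        case False
        then have "s y' = y'" unfolding s_def by (intro if_not_P)
        then have "y' = mu ^ (t + a) mod p" using sy eq by simp
        moreover have "a dvd t + a" using t by simp
        ultimately show ?thesis using False by blast
      qed
    next
      case False
      then have sy: "s y = y" unfolding s_def by (intro if_not_P)
      show ?thesis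
      proof (cases "\<exists>t. a dvd t \<and> y' = mu ^ t mod p")
        case True
        then obtain t' where t': "a dvd t'" "y' = mu ^ t' mod p" by blast
        have "s y' = mu ^ (t' + a) mod p" using sp[of t'] t' by simp
        then have "y = mu ^ (t' + a) mod p" using sy eq by simp
        moreover have "a dvd t' + a" using t' by simp
        ultimately show ?thesis using False by blast
      next
        case False
        then have "s y' = y'" unfolding s_def by (intro if_not_P)
        then show ?thesis using sy eq by simp
      qed
    qed
  qed
  show "s ((mu ^ E * y) mod p) = (mu ^ E * s y) mod p" if aE: "a dvd E" and y: "y < p" for E y
  proof (cases "\<exists>t. a dvd t \<and> y = mu ^ t mod p")
    case True
    then obtain t where t: "a dvd t" "y = mu ^ t mod p" by blast
    have "(mu ^ E * y) mod p = mu ^ (E + t) mod p" using t by (simp add: mod_mult_right_eq power_add)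
    then have "s ((mu ^ E * y) mod p) = mu ^ (E + t + a) mod p" using sp[of "E + t"] aE t by simp
    moreover have "s y = mu ^ (t + a) mod p" using sp[of t] t by simp
    then have "(mu ^ E * s y) mod p = mu ^ (E + (t + a)) mod p" by (simp add: mod_mult_right_eq power_add)
    ultimately show ?thesis by (simp add: add.assoc)
  next
    case False
    then have sy: "s y = y" unfolding s_def by (intro if_not_P)
    have "\<not> (\<exists>t. a dvd t \<and> (mu ^ E * y) mod p = mu ^ t mod p)"
    proof
      assume "\<exists>t. a dvd t \<and> (mu ^ E * y) mod p = mu ^ t mod p"
      then obtain t where t: "a dvd t" "(mu ^ E * y) mod p = mu ^ t mod p" by blast
      have c: "mu ^ ((p - 2) * E + E) mod p = mu ^ 0 mod p"
        by (rule pc'[THEN iffD2, OF cong_pm2])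
      have c1: "mu ^ ((p - 2) * E + E) mod p = 1" using c p1 by simp
      have "y = (mu ^ ((p - 2) * E + E) mod p * y) mod p"
        using c1 y by simp
      also have "\<dots> = (mu ^ ((p - 2) * E + E) * y) mod p"
        by (rule mod_mult_left_eq)
      also have "\<dots> = (mu ^ ((p - 2) * E) * (mu ^ E * y)) mod p"
        by (simp only: power_add mult.assoc)
      also have "\<dots> = (mu ^ ((p - 2) * E) * ((mu ^ E * y) mod p)) mod p"
        by (rule mod_mult_right_eq[symmetric])
      also have "\<dots> = mu ^ ((p - 2) * E + t) mod p"
        using t by (simp add: power_add mod_mult_right_eq)
      finally have "y = mu ^ ((p - 2) * E + t) mod p" .
      moreover have "a dvd (p - 2) * E + t" using aE t by simp
      ultimately show False using False by blast
    qed
    then have "s ((mu ^ E * y) mod p) = (mu ^ E * y) mod p" unfolding s_def by (intro if_not_P)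
    then show ?thesis using sy by simp
  qed
  show "\<exists>E'. a dvd E' \<and> [E = E'] (mod (p - 1))"
    if H: "\<forall>y<p. s ((mu ^ E * y) mod p) = (mu ^ F * s y) mod p" for E F
  proof (cases "a dvd E")
    case True
    show ?thesis by (intro exI[of _ E] conjI True cong_refl)
  next
    case False
    have H': "[E + u + (if a dvd E + u then a else 0) = F + u + (if a dvd u then a else 0)] (mod (p - 1))" for u
    proof -
      define c1 where "c1 = (if a dvd E + u then a else 0)"
      define c2 where "c2 = (if a dvd u then a else 0)"
      have sp1: "s (mu ^ (E + u) mod p) = mu ^ (E + u + c1) mod p" unfolding c1_def by (rule sp)
      have sp2: "s (mu ^ u mod p) = mu ^ (u + c2) mod p" unfolding c2_def by (rule sp)
      have yl: "mu ^ u mod p < p" using p1 by simp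
      have m1: "(mu ^ E * (mu ^ u mod p)) mod p = mu ^ (E + u) mod p"
        by (simp only: mod_mult_right_eq power_add)
      have "s ((mu ^ E * (mu ^ u mod p)) mod p) = (mu ^ F * s (mu ^ u mod p)) mod p"
        using H yl by blast
      also have "(mu ^ F * s (mu ^ u mod p)) mod p = (mu ^ F * (mu ^ (u + c2) mod p)) mod p"
        by (simp only: sp2)
      also have "\<dots> = mu ^ (F + u + c2) mod p"
        by (simp only: mod_mult_right_eq power_add mult.assoc)
      finally have "mu ^ (E + u + c1) mod p = mu ^ (F + u + c2) mod p"
        by (simp only: m1 sp1)
      then have "[E + u + c1 = F + u + c2] (mod (p - 1))" by (rule pc'[THEN iffD1])
      then show ?thesis unfolding c1_def c2_def .
    qed
    have "\<not> (p - 1 = 4 \<and> a = 2)" using an(4) by auto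
    then have False by (rule arith_key[OF an(1-3) _ False H'])
    then show ?thesis ..
  qed
qed

lemma FINAL:
  assumes "i < d" "s ` {..<p} \<subseteq> {..<p}" "inj_on s {..<p}"
    and A: "\<And>E y. a dvd E \<Longrightarrow> y < p \<Longrightarrow> s ((mu ^ E * y) mod p) = (mu ^ E * s y) mod p"
    and B: "\<And>E F. (\<forall>y<p. s ((mu ^ E * y) mod p) = (mu ^ F * s y) mod p) \<Longrightarrow> \<exists>E'. a dvd E' \<and> [E = E'] (mod (p - 1))"
  shows "\<exists>x \<in> carrier (SymV p d).
    generate (SymV p d) (gdiag p d mu ` {..<d}) \<inter>
      conjg (SymV p d) (generate (SymV p d) (gdiag p d mu ` {..<d})) x
    = generate (SymV p d)
        (gdiag p d mu ` ({..<d} - {i}) \<union> {gdiag p d mu i [^]\<^bsub>SymV p d\<^esub> a})"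
proof (rule bexI[where x = "Xm p d i s"])
  show "Xm p d i s \<in> carrier (SymV p d)" using X_carrier[OF assms(1-3)] by (simp add: SymV_def)
  show "generate (SymV p d) (gdiag p d mu ` {..<d}) \<inter>
      conjg (SymV p d) (generate (SymV p d) (gdiag p d mu ` {..<d})) (Xm p d i s)
    = generate (SymV p d)
        (gdiag p d mu ` ({..<d} - {i}) \<union> {gdiag p d mu i [^]\<^bsub>SymV p d\<^esub> a})"
    unfolding SymV_def T_eq H_eq[OF assms(1)] by (rule MAIN[OF assms])
qed


end

theorem lemma3p6:
  fixes p d mu i a :: nat
  assumes "Factorial_Ring.prime p" and "p \<ge> 3" and "d \<ge> 1" and "p ^ d \<ge> 7"
    and "mu < p" and "residue_primroot p mu"
    and "i < d"
    and "a > 0" and "a dvd (p - 1)" and "(p, a) \<noteq> (5, 2)"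
  shows "\<exists>x \<in> carrier (SymV p d).
    generate (SymV p d) (gdiag p d mu ` {..<d}) \<inter>
      conjg (SymV p d) (generate (SymV p d) (gdiag p d mu ` {..<d})) x
    = generate (SymV p d)
        (gdiag p d mu ` ({..<d} - {i}) \<union> {gdiag p d mu i [^]\<^bsub>SymV p d\<^esub> a})"
proof -
  have p1: "p > 1" using assms(2) by simp
  have cop: "coprime p mu" using assms(6) by (simp add: residue_primroot_def)
  have ordp: "ord p mu = p - 1" using assms(6,1) by (simp add: residue_primroot_def totient_prime)
  have pc: "\<And>A B. [mu^A = mu^B] (mod p) \<longleftrightarrow> [A = B] (mod (p-1))"
    using order_divides_expdiff[OF cop] ordp by simp
  have ale: "a \<le> p - 1" using assms(9) p1 by (auto dest: dvd_imp_le)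
  show ?thesis
  proof (cases "a = p - 1")
    case True
    note c = case1[OF p1 cop pc True]
    show ?thesis by (rule FINAL[OF p1 cop pc assms(7) c(1) c(2) c(3) c(4)]) auto
  next
    case False
    then have alt: "a < p - 1" using ale by simp
    have n52: "\<not> (p = 5 \<and> a = 2)" using assms(10) by auto
    note c = case2[OF p1 cop pc assms(9) assms(8) alt n52]
    show ?thesis by (rule FINAL[OF p1 cop pc assms(7) c(1) c(2) c(3) c(4)]) auto
  qed
qed

end
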